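(* Let $T$ be a left-continuous $t$-norm, let $\star=\star_T$, and let $(G,\cdot,D,T)$ and $(G',\cdot,D',T)$ be two complete invariant Menger groups. Then the following are equivalent: (1) there is a group isomorphism $\mathcal I:G\to G'$ with $D'(\mathcal I(x),\mathcal I(y))=D(x,y)$ for all $x,y\in G$; (2) there is a monoid isomorphism $\Phi:(Lip^1_\star(G,\Delta^+),\odot)\to(Lip^1_\star(G',\Delta^+),\odot)$ with $\overline{\mathbb D}'(\Phi(f),\Phi(g))=\overline{\mathbb D}(f,g)$ for all $f,g\in Lip^1_\star(G,\Delta^+)$.
   Context: A distribution function is a nondecreasing, left-continuous function $F:[-\infty,+\infty]\to[0,1]$ with $F(-\infty)=0$, $F(+\infty)=1$; $\Delta^+$ is the set of distribution functions with $F(0)=0$, ordered pointwise (a complete lattice with maximum $\mathcal H_0$, $\mathcal H_0(t)=0$ for $t\le0$, $1$ for $t>0$, and minimum $\mathcal H_\infty$, $\mathcal H_\infty(t)=0$ for $t<+\infty$, $\mathcal H_\infty(+\infty)=1$). A $t$-norm is a map $T:[0,1]^2\to[0,1]$ that is commutative, associative, nondecreasing in each argument, with $T(x,1)=x$. For a $t$-norm $T$, $(L\star_T K)(t)=\sup_{s+u=t}T(L(s),K(u))$; the paper uses (as a known fact from the literature) that for left-continuous $T$, $\star_T$ is a triangle function (commutative, associative, nondecreasing in each argument, $F\star_T\mathcal H_0=F$) which is continuous ($F_n\star_T L_n\xrightarrow{w}F\star_T L$ whenever $F_n\xrightarrow{w}F$, $L_n\xrightarrow{w}L$, where $\xrightarrow{w}$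 denotes convergence at every continuity point of the limit) and sup-continuous ($\sup_i(F_i\star_T L)=(\sup_iF_i)\star_T L$ for every nonempty family). A Menger group $(G,\cdot,D,T)$ is a group $G$ with $D:G\times G\to\Delta^+$ satisfying (i) $D(p,q)=\mathcal H_0$ iff $p=q$; (ii) $D(p,q)=D(q,p)$; (iii) $D(p,q)\star_T D(q,r)\le D(p,r)$; it is invariant if $D(pr,qr)=D(rp,rq)=D(p,q)$ for all $p,q,r$, and complete if for every sequence $(z_n)$ with $D(z_n,z_p)\xrightarrow{w}\mathcal H_0$ ($n,p\to\infty$) there is $z$ with $D(z_n,z)\xrightarrow{w}\mathcal H_0$. $Lip^1_\star(G,\Delta^+)$ is the set of maps $f:G\to\Delta^+$ with $D(x,y)\star f(y)\le f(x)$ for all $x,y$. For maps $f,g:G\to\Delta^+$, $(f\odot g)(x)=\sup_{y,z\in G,\ yz=x}f(y)\star g(z)$. $\Pi(G)$ is the set of $f\in Lip^1_\star(G,\Delta^+)$ for which there is a Cauchy sequence $(a_n)\subset G$ with $D(a_n,x)\xrightarrow{w}f(x)$ for all $x$. $\mathbb D(f,g)=\sup_{x\in G}f(x)\star g(x)$ for $f,g\in\Pi(G)$. $\overline{\mathbb D}$ on $Lip^1_\star(G,\Delta^+)$ is: $\overline{\mathbb D}(f,g)=\mathbb D(f,g)$ if $f,g\in\Pi(G)$; $\overline{\mathbb D}(f,g)=\mathcal H_0$ if $f=g$; $\overline{\mathbb D}(f,g)=\mathcal H_\infty$ if $f\ne g$ and $(f,g)\notin\Pi(G)\times\Pi(G)$;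 $\overline{\mathbb D}'$ is the same construction for $G'$. *)

theory Defs
  imports "HOL-Analysis.Analysis"
begin

type_synonym dfun = "ereal \<Rightarrow> real"

definition distfun :: "dfun \<Rightarrow> bool" where
  "distfun F \<longleftrightarrow> (\<forall>t. 0 \<le> F t \<and> F t \<le> 1) \<and> mono F
     \<and> (\<forall>x::real. ((\<lambda>s. F (ereal s)) \<longlongrightarrow> F (ereal x)) (at_left x))
     \<and> F (-\<infinity>) = 0 \<and> F \<infinity> = 1"

definition DeltaPlus :: "dfun set" where
  "DeltaPlus = {F. distfun F \<and> F 0 = 0}"

definition H0 :: dfun where
  "H0 t = (if t \<le> 0 then 0 else 1)"

definition Hinf :: dfun where
  "Hinf t = (if t = \<infinity> then 1 else 0)"

definition tnorm :: "(real \<Rightarrow> real \<Rightarrow> real) \<Rightarrow> bool" where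
  "tnorm T \<longleftrightarrow>
     (\<forall>x\<in>{0..1}. \<forall>y\<in>{0..1}. T x y \<in> {0..1})
   \<and> (\<forall>x\<in>{0..1}. \<forall>y\<in>{0..1}. T x y = T y x)
   \<and> (\<forall>x\<in>{0..1}. \<forall>y\<in>{0..1}. \<forall>z\<in>{0..1}. T (T x y) z = T x (T y z))
   \<and> (\<forall>x\<in>{0..1}. \<forall>x'\<in>{0..1}. \<forall>y\<in>{0..1}. x \<le> x' \<longrightarrow> T x y \<le> T x' y)
   \<and> (\<forall>x\<in>{0..1}. T x 1 = x)"

definition left_cont_tnorm :: "(real \<Rightarrow> real \<Rightarrow> real) \<Rightarrow> bool" where
  "left_cont_tnorm T \<longleftrightarrow> tnorm T \<and>
     (\<forall>y\<in>{0..1}. \<forall>x\<in>{0<..1}. ((\<lambda>s. T s y) \<longlongrightarrow> T x y) (at_left x))"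

text \<open>The triangle function (L star_T K)(t) = sup over s+u=t of T(L s, K u).\<close>
definition conv :: "(real \<Rightarrow> real \<Rightarrow> real) \<Rightarrow> dfun \<Rightarrow> dfun \<Rightarrow> dfun" where
  "conv T L K = (\<lambda>t. Sup {T (L s) (K u) | s u. s + u = t})"

definition DSup :: "dfun set \<Rightarrow> dfun" where
  "DSup A = (\<lambda>t. Sup ((\<lambda>F. F t) ` A))"

definition wconv :: "('i \<Rightarrow> dfun) \<Rightarrow> dfun \<Rightarrow> 'i filter \<Rightarrow> bool" where
  "wconv Fs F net \<longleftrightarrow>
     (\<forall>t::real. isCont (\<lambda>x. F (ereal x)) t \<longrightarrow> ((\<lambda>i. Fs i (ereal t)) \<longlongrightarrow> F (ereal t)) net)"

definition menger_group ::
  "(real \<Rightarrow> real \<Rightarrow> real) \<Rightarrow> ('a::group_add \<Rightarrow> 'a \<Rightarrow> dfun) \<Rightarrow> bool" where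
  "menger_group T D \<longleftrightarrow>
     (\<forall>p q. D p q \<in> DeltaPlus)
   \<and> (\<forall>p q. D p q = H0 \<longleftrightarrow> p = q)
   \<and> (\<forall>p q. D p q = D q p)
   \<and> (\<forall>p q r. conv T (D p q) (D q r) \<le> D p r)"

definition invariant :: "('a::group_add \<Rightarrow> 'a \<Rightarrow> dfun) \<Rightarrow> bool" where
  "invariant D \<longleftrightarrow> (\<forall>p q r. D (p + r) (q + r) = D p q \<and> D (r + p) (r + q) = D p q)"

definition cauchy_seq :: "('a \<Rightarrow> 'a \<Rightarrow> dfun) \<Rightarrow> (nat \<Rightarrow> 'a) \<Rightarrow> bool" where
  "cauchy_seq D z \<longleftrightarrow> wconv (\<lambda>(n, p). D (z n) (z p)) H0 (sequentially \<times>\<^sub>F sequentially)"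

definition complete_mg :: "('a \<Rightarrow> 'a \<Rightarrow> dfun) \<Rightarrow> bool" where
  "complete_mg D \<longleftrightarrow>
     (\<forall>z. cauchy_seq D z \<longrightarrow> (\<exists>x. wconv (\<lambda>n. D (z n) x) H0 sequentially))"

definition Lip ::
  "(real \<Rightarrow> real \<Rightarrow> real) \<Rightarrow> ('a \<Rightarrow> 'a \<Rightarrow> dfun) \<Rightarrow> ('a \<Rightarrow> dfun) set" where
  "Lip T D = {f. (\<forall>x. f x \<in> DeltaPlus) \<and> (\<forall>x y. conv T (D x y) (f y) \<le> f x)}"

definition odot ::
  "(real \<Rightarrow> real \<Rightarrow> real) \<Rightarrow> ('a::group_add \<Rightarrow> dfun) \<Rightarrow> ('a \<Rightarrow> dfun) \<Rightarrow> 'a \<Rightarrow> dfun" where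
  "odot T f g = (\<lambda>x. DSup {conv T (f y) (g z) | y z. y + z = x})"

definition PiG ::
  "(real \<Rightarrow> real \<Rightarrow> real) \<Rightarrow> ('a \<Rightarrow> 'a \<Rightarrow> dfun) \<Rightarrow> ('a \<Rightarrow> dfun) set" where
  "PiG T D = {f \<in> Lip T D. \<exists>a. cauchy_seq D a \<and> (\<forall>x. wconv (\<lambda>n. D (a n) x) (f x) sequentially)}"

definition DD :: "(real \<Rightarrow> real \<Rightarrow> real) \<Rightarrow> ('a \<Rightarrow> dfun) \<Rightarrow> ('a \<Rightarrow> dfun) \<Rightarrow> dfun" where
  "DD T f g = DSup (range (\<lambda>x. conv T (f x) (g x)))"

definition Dbar ::
  "(real \<Rightarrow> real \<Rightarrow> real) \<Rightarrow> ('a \<Rightarrow> 'a \<Rightarrow> dfun) \<Rightarrow> ('a \<Rightarrow> dfun) \<Rightarrow> ('a \<Rightarrow> dfun) \<Rightarrow> dfun" where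
  "Dbar T D f g =
     (if f \<in> PiG T D \<and> g \<in> PiG T D then DD T f g
      else if f = g then H0 else Hinf)"

end

theory Submission
  imports Defs
begin

locale LT =
  fixes T :: "real \<Rightarrow> real \<Rightarrow> real"
  assumes lct: "left_cont_tnorm T"
begin

lemma tn: "tnorm T" using lct unfolding left_cont_tnorm_def by simp

lemma T_range: "0 \<le> a \<Longrightarrow> a \<le> 1 \<Longrightarrow> 0 \<le> b \<Longrightarrow> b \<le> 1 \<Longrightarrow> 0 \<le> T a b \<and> T a b \<le> 1"
  using tn unfolding tnorm_def by auto

lemma T_comm: "0 \<le> a \<Longrightarrow> a \<le> 1 \<Longrightarrow> 0 \<le> b \<Longrightarrow> b \<le> 1 \<Longrightarrow> T a b = T b a"
  using tn unfolding tnorm_def by auto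

lemma T_assoc: "0 \<le> a \<Longrightarrow> a \<le> 1 \<Longrightarrow> 0 \<le> b \<Longrightarrow> b \<le> 1 \<Longrightarrow> 0 \<le> c \<Longrightarrow> c \<le> 1
   \<Longrightarrow> T (T a b) c = T a (T b c)"
  using tn unfolding tnorm_def by auto

lemma T_one: "0 \<le> a \<Longrightarrow> a \<le> 1 \<Longrightarrow> T a 1 = a"
  using tn unfolding tnorm_def by (meson atLeastAtMost_iff)

lemma T_mono1: "0 \<le> a \<Longrightarrow> a \<le> a' \<Longrightarrow> a' \<le> 1 \<Longrightarrow> 0 \<le> b \<Longrightarrow> b \<le> 1 \<Longrightarrow> T a b \<le> T a' b"
  using tn unfolding tnorm_def by auto

lemma T_mono: "0 \<le> a \<Longrightarrow> a \<le> a' \<Longrightarrow> a' \<le> 1 \<Longrightarrow> 0 \<le> b \<Longrightarrow> b \<le> b' \<Longrightarrow> b' \<le> 1 \<Longrightarrow> T a b \<le> T a' b'"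
proof -
  assume h: "0 \<le> a" "a \<le> a'" "a' \<le> 1" "0 \<le> b" "b \<le> b'" "b' \<le> 1"
  have "T a b \<le> T a' b" using T_mono1 h by auto
  also have "\<dots> = T b a'" using T_comm h by auto
  also have "\<dots> \<le> T b' a'" using T_mono1 h by auto
  also have "\<dots> = T a' b'" using T_comm h by auto
  finally show ?thesis .
qed

lemma T_le1: "0 \<le> a \<Longrightarrow> a \<le> 1 \<Longrightarrow> 0 \<le> b \<Longrightarrow> b \<le> 1 \<Longrightarrow> T a b \<le> a"
  using T_mono[of a a b 1] T_one by auto

lemma T_le2: "0 \<le> a \<Longrightarrow> a \<le> 1 \<Longrightarrow> 0 \<le> b \<Longrightarrow> b \<le> 1 \<Longrightarrow> T a b \<le> b"
  using T_le1 T_comm by metis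

lemma T_zero1: "0 \<le> b \<Longrightarrow> b \<le> 1 \<Longrightarrow> T 0 b = 0"
  using T_le1[of 0 b] T_range[of 0 b] by auto

lemma T_zero2: "0 \<le> b \<Longrightarrow> b \<le> 1 \<Longrightarrow> T b 0 = 0"
  using T_le2[of b 0] T_range[of b 0] by auto

lemma T_one1: "0 \<le> a \<Longrightarrow> a \<le> 1 \<Longrightarrow> T 1 a = a"
  using T_one T_comm by (metis order_refl zero_le_one)

lemma T_lc: "0 \<le> y \<Longrightarrow> y \<le> 1 \<Longrightarrow> 0 < x \<Longrightarrow> x \<le> 1 \<Longrightarrow> ((\<lambda>s. T s y) \<longlongrightarrow> T x y) (at_left x)"
  using lct unfolding left_cont_tnorm_def by auto

lemma T_Sup_le:
  assumes a: "0 \<le> a" "a \<le> 1" and B: "B \<noteq> {}" "\<And>b. b \<in> B \<Longrightarrow> 0 \<le> b \<and> b \<le> 1"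
    and le: "\<And>b. b \<in> B \<Longrightarrow> T a b \<le> c"
  shows "T a (Sup B) \<le> c"
proof -
  have bdd: "bdd_above B" using B by (auto intro: bdd_aboveI[of _ 1])
  define S where "S = Sup B"
  have S1: "S \<le> 1" unfolding S_def using B by (auto intro: cSup_least)
  obtain b0 where b0: "b0 \<in> B" using B by auto
  have S0: "b0 \<le> S" unfolding S_def using b0 bdd by (auto intro: cSup_upper)
  show ?thesis
  proof (cases "S \<in> B")
    case True then show ?thesis using le S_def by auto
  next
    case False
    have Spos: "0 < S" using S0 B(2)[OF b0] False b0 by (cases "b0 = S") auto
    have lim: "((\<lambda>s. T s a) \<longlongrightarrow> T S a) (at_left S)" using T_lc a Spos S1 by auto
    have ev: "eventually (\<lambda>s. T s a \<le> c) (at_left S)"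
    proof -
      have "eventually (\<lambda>s. s \<in> {0<..<S}) (at_left S)" using eventually_at_left_real Spos by blast
      then show ?thesis
      proof (rule eventually_mono)
        fix s assume s: "s \<in> {0<..<S}"
        then have "s < Sup B" using S_def by auto
        then obtain b where b: "b \<in> B" "s < b" using less_cSupE[of s B] B by blast
        have "T s a \<le> T b a" using T_mono1[of s b a] s b B(2)[OF b(1)] a by auto
        also have "\<dots> = T a b" using T_comm B(2)[OF b(1)] a by auto
        also have "\<dots> \<le> c" using le b by auto
        finally show "T s a \<le> c" .
      qed
    qed
    have "T S a \<le> c" using tendsto_upperbound[OF lim ev] by simp
    then show ?thesis using T_comm a Spos S1 S_def by auto
  qed
qed

lemma T_near1:
  assumes "0 < e"
  shows "\<exists>d>0. \<forall>a b. 1 - d < a \<longrightarrow> a \<le> 1 \<longrightarrow> 1 - d < b \<longrightarrow> b \<le> 1 \<longrightarrow> 1 - e < T a b"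
proof -
  define y0 where "y0 = max (1 - e/2) (1/2)"
  have y0: "0 < y0" "y0 < 1" "1 - e < y0" using assms unfolding y0_def by auto
  have lim: "((\<lambda>s. T s y0) \<longlongrightarrow> T 1 y0) (at_left 1)" using T_lc y0 by auto
  have "T 1 y0 = y0" using T_one1 y0 by auto
  then have "eventually (\<lambda>s. 1 - e < T s y0) (at_left 1)" using order_tendstoD(1)[OF lim] y0 by auto
  then obtain b where b: "b < 1" "\<forall>s>b. s < 1 \<longrightarrow> 1 - e < T s y0" unfolding eventually_at_left_field by auto
  define s0 where "s0 = max ((b+1)/2) (1/2)"
  have s0: "b < s0" "s0 < 1" "0 < s0" using b unfolding s0_def by (auto simp: max_def)
  have T0: "1 - e < T s0 y0" using b s0 by auto
  show ?thesis
  proof (intro exI[of _ "min (1 - s0) (1 - y0)"] conjI allI impI)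
    show "0 < min (1 - s0) (1 - y0)" using s0 y0 by auto
    fix a b' assume h: "1 - min (1 - s0) (1 - y0) < a" "a \<le> 1" "1 - min (1 - s0) (1 - y0) < b'" "b' \<le> 1"
    have "T s0 y0 \<le> T a b'" using T_mono[of s0 a y0 b'] h s0 y0 by auto
    then show "1 - e < T a b'" using T0 by auto
  qed
qed

lemma T_near_c:
  assumes c: "0 \<le> c" "c \<le> 1" and e: "0 < e"
  shows "\<exists>d>0. \<forall>a. 1 - d < a \<longrightarrow> a \<le> 1 \<longrightarrow> c - e < T c a"
proof -
  have lim: "((\<lambda>s. T s c) \<longlongrightarrow> T 1 c) (at_left 1)" using T_lc c by auto
  have "T 1 c = c" using T_one1 c by auto
  then have "eventually (\<lambda>s. c - e < T s c) (at_left 1)" using order_tendstoD(1)[OF lim] e by auto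
  then obtain b where b: "b < 1" "\<forall>s>b. s < 1 \<longrightarrow> c - e < T s c" unfolding eventually_at_left_field by auto
  define s0 where "s0 = max ((b+1)/2) (1/2)"
  have s0: "b < s0" "s0 < 1" "0 < s0" using b unfolding s0_def by (auto simp: max_def)
  have T0: "c - e < T s0 c" using b s0 by auto
  show ?thesis
  proof (intro exI[of _ "1 - s0"] conjI allI impI)
    show "0 < 1 - s0" using s0 by auto
    fix a assume h: "1 - (1 - s0) < a" "a \<le> 1"
    have "T s0 c \<le> T a c" using T_mono1[of s0 a c] h s0 c by auto
    also have "\<dots> = T c a" using T_comm h s0 c by auto
    finally show "c - e < T c a" using T0 by auto
  qed
qed

lemma T_near_c2:
  assumes c: "0 \<le> c" "c \<le> 1" and e: "0 < e"
  shows "\<exists>d>0. \<forall>a b. 1 - d < a \<longrightarrow> a \<le> 1 \<longrightarrow> 1 - d < b \<longrightarrow> b \<le> 1 \<longrightarrow> c - e < T (T c a) b"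
proof -
  obtain d1 where d1: "d1 > 0" "\<forall>a. 1 - d1 < a \<longrightarrow> a \<le> 1 \<longrightarrow> c - e/2 < T c a"
    using T_near_c[OF c, of "e/2"] e by auto
  define a0 where "a0 = max (1 - d1/2) 0"
  have a0: "1 - d1 < a0" "a0 \<le> 1" "0 \<le> a0" using d1 unfolding a0_def by auto
  define c' where "c' = T c a0"
  have c': "0 \<le> c'" "c' \<le> 1" "c - e/2 < c'" using T_range[of c a0] c a0 d1 unfolding c'_def by auto
  obtain d2 where d2: "d2 > 0" "\<forall>a. 1 - d2 < a \<longrightarrow> a \<le> 1 \<longrightarrow> c' - e/2 < T c' a"
    using T_near_c[OF c'(1,2), of "e/2"] e by auto
  show ?thesis
  proof (intro exI[of _ "min (min (d1/2) d2) 1"] conjI allI impI)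
    show "0 < min (min (d1/2) d2) 1" using d1 d2 by auto
    fix a b assume h: "1 - min (min (d1/2) d2) 1 < a" "a \<le> 1" "1 - min (min (d1/2) d2) 1 < b" "b \<le> 1"
    have aa0: "a0 \<le> a" using h a0 unfolding a0_def by auto
    have r: "0 \<le> T c a" "T c a \<le> 1" using T_range[of c a] c h a0 aa0 by auto
    have "c' \<le> T c a" unfolding c'_def using T_mono[of c c a0 a] c a0 aa0 h by auto
    then have "T c' b \<le> T (T c a) b" using T_mono1[of c' "T c a" b] c' r h d1 d2 by auto
    moreover have "c' - e/2 < T c' b" using d2 h by auto
    ultimately show "c - e < T (T c a) b" using c' by auto
  qed
qed

end

lemma DP_range: "F \<in> DeltaPlus \<Longrightarrow> 0 \<le> F t \<and> F t \<le> 1"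
  unfolding DeltaPlus_def distfun_def by auto
lemma DP_mono: "F \<in> DeltaPlus \<Longrightarrow> s \<le> t \<Longrightarrow> F s \<le> F t"
  unfolding DeltaPlus_def distfun_def by (auto dest: monoD)
lemma DP_minf: "F \<in> DeltaPlus \<Longrightarrow> F (-\<infinity>) = 0"
  unfolding DeltaPlus_def distfun_def by auto
lemma DP_inf: "F \<in> DeltaPlus \<Longrightarrow> F \<infinity> = 1"
  unfolding DeltaPlus_def distfun_def by auto
lemma DP_0: "F \<in> DeltaPlus \<Longrightarrow> F 0 = 0"
  unfolding DeltaPlus_def distfun_def by auto
lemma DP_nonpos: "F \<in> DeltaPlus \<Longrightarrow> t \<le> 0 \<Longrightarrow> F t = 0"
  using DP_mono[of F t 0] DP_0[of F] DP_range[of F t] by auto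
lemma DP_lc: "F \<in> DeltaPlus \<Longrightarrow> ((\<lambda>s. F (ereal s)) \<longlongrightarrow> F (ereal x)) (at_left x)"
  unfolding DeltaPlus_def distfun_def by auto

lemma H0_DP: "H0 \<in> DeltaPlus"
proof -
  have m: "mono H0" unfolding mono_def H0_def by auto
  have lc: "((\<lambda>s. H0 (ereal s)) \<longlongrightarrow> H0 (ereal x)) (at_left x)" for x
  proof (cases "x \<le> 0")
    case True
    have "eventually (\<lambda>s. H0 (ereal s) = H0 (ereal x)) (at_left x)"
      unfolding eventually_at_left_field using True
      by (intro exI[of _ "x - 1"]) (auto simp: H0_def)
    then show ?thesis by (rule tendsto_eventually)
  next
    case False
    have "eventually (\<lambda>s. H0 (ereal s) = H0 (ereal x)) (at_left x)"
      unfolding eventually_at_left_field using False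
      by (intro exI[of _ "0"]) (auto simp: H0_def)
    then show ?thesis by (rule tendsto_eventually)
  qed
  show ?thesis unfolding DeltaPlus_def distfun_def using m lc by (auto simp: H0_def)
qed

lemma Hinf_DP: "Hinf \<in> DeltaPlus"
proof -
  have m: "mono Hinf" unfolding mono_def Hinf_def by auto
  have "((\<lambda>s. Hinf (ereal s)) \<longlongrightarrow> Hinf (ereal x)) (at_left x)" for x
    by (simp add: Hinf_def)
  then show ?thesis unfolding DeltaPlus_def distfun_def using m by (auto simp: Hinf_def)
qed

lemma ereal_sum_fin: "s + u = ereal r \<Longrightarrow> \<exists>a b. s = ereal a \<and> u = ereal b \<and> a + b = r"
  by (cases s; cases u) auto

lemma ereal_sum_minf: "(s::ereal) + u = -\<infinity> \<Longrightarrow> s = -\<infinity> \<or> u = -\<infinity>"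
  by (cases s; cases u) auto

lemma ereal_sum_0: "(s::ereal) + u = 0 \<Longrightarrow> \<exists>a. s = ereal a \<and> u = ereal (-a)"
  by (cases s; cases u) auto

context LT
begin

lemma conv_bdd: "L \<in> DeltaPlus \<Longrightarrow> K \<in> DeltaPlus \<Longrightarrow>
   bdd_above {T (L s) (K u) | s u. s + u = t}"
  by (rule bdd_aboveI[of _ 1]) (use T_range DP_range in blast)

lemma conv_ge: "L \<in> DeltaPlus \<Longrightarrow> K \<in> DeltaPlus \<Longrightarrow> s + u = t \<Longrightarrow>
   T (L s) (K u) \<le> conv T L K t"
  unfolding conv_def by (rule cSup_upper) (auto intro: conv_bdd)

lemma conv_le: "L \<in> DeltaPlus \<Longrightarrow> K \<in> DeltaPlus \<Longrightarrow>
   (\<And>s u. s + u = t \<Longrightarrow> T (L s) (K u) \<le> c) \<Longrightarrow> conv T L K t \<le> c"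
  unfolding conv_def by (rule cSup_least) (use add_0_right[of t] in blast, blast)

lemma conv_range: "L \<in> DeltaPlus \<Longrightarrow> K \<in> DeltaPlus \<Longrightarrow> 0 \<le> conv T L K t \<and> conv T L K t \<le> 1"
proof
  assume L: "L \<in> DeltaPlus" and K: "K \<in> DeltaPlus"
  have "T (L t) (K 0) \<le> conv T L K t" using conv_ge[OF L K, of t 0 t] by simp
  then show "0 \<le> conv T L K t" using T_range DP_range L K by (meson order_trans)
  show "conv T L K t \<le> 1" using conv_le[OF L K] T_range DP_range L K by blast
qed

lemma conv_comm: "L \<in> DeltaPlus \<Longrightarrow> K \<in> DeltaPlus \<Longrightarrow> conv T L K = conv T K L"
proof -
  assume L: "L \<in> DeltaPlus" and K: "K \<in> DeltaPlus"
  have "{T (L s) (K u) | s u. s + u = t} = {T (K s) (L u) | s u. s + u = t}" for t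
  proof -
    have "T (L s) (K u) = T (K u) (L s)" for s u using T_comm DP_range L K by auto
    then show ?thesis by (auto simp: add.commute) (metis add.commute)+
  qed
  then show ?thesis unfolding conv_def by simp
qed

lemma conv_H0: assumes K: "K \<in> DeltaPlus" shows "conv T H0 K = K"
proof
  fix t show "conv T H0 K t = K t"
  proof (cases t)
    case PInf
    have "T (H0 \<infinity>) (K \<infinity>) \<le> conv T H0 K \<infinity>" using conv_ge[OF H0_DP K, of \<infinity> \<infinity>] by simp
    moreover have "H0 \<infinity> = 1" "K \<infinity> = 1" using DP_inf K by (auto simp: H0_def)
    ultimately show ?thesis using conv_range[OF H0_DP K, of \<infinity>] PInf T_one by auto
  next
    case MInf
    have "conv T H0 K (-\<infinity>) \<le> 0"
    proof (rule conv_le[OF H0_DP K])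
      fix s u :: ereal assume "s + u = -\<infinity>"
      then have "s = -\<infinity> \<or> u = -\<infinity>" by (rule ereal_sum_minf)
      then show "T (H0 s) (K u) \<le> 0"
        using DP_minf[OF H0_DP] DP_minf[OF K] T_zero1 T_zero2 DP_range[OF K] DP_range[OF H0_DP] by auto
    qed
    then show ?thesis using conv_range[OF H0_DP K, of "-\<infinity>"] MInf DP_minf[OF K] by auto
  next
    case (real r)
    have le: "conv T H0 K (ereal r) \<le> K (ereal r)"
    proof (rule conv_le[OF H0_DP K])
      fix s u :: ereal assume "s + u = ereal r"
      then obtain a b where ab: "s = ereal a" "u = ereal b" "a + b = r" using ereal_sum_fin by blast
      show "T (H0 s) (K u) \<le> K (ereal r)"
      proof (cases "a \<le> 0")
        case True
        then have "H0 s = 0" using ab by (simp add: H0_def)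
        then show ?thesis using T_zero1 DP_range[OF K] by auto
      next
        case False
        then have "H0 s = 1" using ab by (simp add: H0_def)
        moreover have "K u \<le> K (ereal r)" using DP_mono[OF K] ab False by auto
        ultimately show ?thesis using T_one1 DP_range[OF K] by auto
      qed
    qed
    have ge: "K (ereal r) \<le> conv T H0 K (ereal r)"
    proof (rule tendsto_upperbound[OF DP_lc[OF K]])
      show "eventually (\<lambda>v. K (ereal v) \<le> conv T H0 K (ereal r)) (at_left r)"
        unfolding eventually_at_left_field
      proof (intro exI[of _ "r - 1"] conjI allI impI)
        fix v assume v: "r - 1 < v" "v < r"
        have "T (H0 (ereal (r - v))) (K (ereal v)) \<le> conv T H0 K (ereal r)"
          using conv_ge[OF H0_DP K, of "ereal (r - v)" "ereal v"] by simp
        moreover have "H0 (ereal (r - v)) = 1" using v by (simp add: H0_def)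
        ultimately show "K (ereal v) \<le> conv T H0 K (ereal r)" using T_one1 DP_range[OF K] by auto
      qed auto
    qed simp
    show ?thesis using le ge real by auto
  qed
qed

lemma conv_H0': "K \<in> DeltaPlus \<Longrightarrow> conv T K H0 = K"
  using conv_H0 conv_comm H0_DP by metis

lemma conv_mono: assumes L: "L \<in> DeltaPlus" and K: "K \<in> DeltaPlus" and tt: "t \<le> t'"
  shows "conv T L K t \<le> conv T L K t'"
proof (rule conv_le[OF L K])
  fix s u :: ereal assume su: "s + u = t"
  show "T (L s) (K u) \<le> conv T L K t'"
  proof (cases t')
    case PInf
    have "T (L \<infinity>) (K \<infinity>) \<le> conv T L K t'" using conv_ge[OF L K, of \<infinity> \<infinity>] PInf by simp
    then show ?thesis using DP_inf[OF L] DP_inf[OF K] T_one T_range DP_range L K by (metis order_trans)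
  next
    case MInf
    then have "t = -\<infinity>" using tt by auto
    then have "s = -\<infinity> \<or> u = -\<infinity>" using su ereal_sum_minf by auto
    then have "T (L s) (K u) = 0"
      using DP_minf[OF L] DP_minf[OF K] T_zero1 T_zero2 DP_range[OF K] DP_range[OF L] by auto
    then show ?thesis using conv_range[OF L K] by auto
  next
    case (real r')
    show ?thesis
    proof (cases t)
      case MInf
      then have "s = -\<infinity> \<or> u = -\<infinity>" using su ereal_sum_minf by auto
      then have "T (L s) (K u) = 0"
        using DP_minf[OF L] DP_minf[OF K] T_zero1 T_zero2 DP_range[OF K] DP_range[OF L] by auto
      then show ?thesis using conv_range[OF L K] by auto
    next
      case PInf then show ?thesis using tt real by auto
    next
      case (real r)
      obtain a b where ab: "s = ereal a" "u = ereal b" "a + b = r" using ereal_sum_fin su real by blast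
      have rr: "r \<le> r'" using tt real \<open>t' = ereal r'\<close> by auto
      have "T (L s) (K u) \<le> T (L s) (K (ereal (b + (r' - r))))"
        using T_mono[of "L s" "L s" "K u"] DP_range L K DP_mono[OF K, of u "ereal (b + (r' - r))"] ab rr by auto
      also have "\<dots> \<le> conv T L K t'"
        by (rule conv_ge[OF L K]) (use ab \<open>t' = ereal r'\<close> in auto)
      finally show ?thesis .
    qed
  qed
qed

lemma conv_minf: assumes L: "L \<in> DeltaPlus" and K: "K \<in> DeltaPlus" shows "conv T L K (-\<infinity>) = 0"
proof -
  have "conv T L K (-\<infinity>) \<le> 0"
  proof (rule conv_le[OF L K])
    fix s u :: ereal assume "s + u = -\<infinity>"
    then have "s = -\<infinity> \<or> u = -\<infinity>" by (rule ereal_sum_minf)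
    then show "T (L s) (K u) \<le> 0"
      using DP_minf[OF L] DP_minf[OF K] T_zero1 T_zero2 DP_range[OF K] DP_range[OF L] by auto
  qed
  then show ?thesis using conv_range[OF L K, of "-\<infinity>"] by auto
qed

lemma conv_inf: assumes L: "L \<in> DeltaPlus" and K: "K \<in> DeltaPlus" shows "conv T L K \<infinity> = 1"
proof -
  have "T (L \<infinity>) (K \<infinity>) \<le> conv T L K \<infinity>" using conv_ge[OF L K, of \<infinity> \<infinity>] by simp
  then show ?thesis using DP_inf[OF L] DP_inf[OF K] T_one conv_range[OF L K, of \<infinity>] by auto
qed

lemma conv_0: assumes L: "L \<in> DeltaPlus" and K: "K \<in> DeltaPlus" shows "conv T L K 0 = 0"
proof -
  have "conv T L K 0 \<le> 0"
  proof (rule conv_le[OF L K])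
    fix s u :: ereal assume "s + u = 0"
    then obtain a where a: "s = ereal a" "u = ereal (-a)" using ereal_sum_0 by blast
    show "T (L s) (K u) \<le> 0"
    proof (cases "a \<le> 0")
      case True then have "L s = 0" using DP_nonpos[OF L] a by auto
      then show ?thesis using T_zero1 DP_range[OF K] by auto
    next
      case False then have "K u = 0" using DP_nonpos[OF K] a by auto
      then show ?thesis using T_zero2 DP_range[OF L] by auto
    qed
  qed
  then show ?thesis using conv_range[OF L K, of 0] by auto
qed

lemma conv_lc_witness:
  assumes L: "L \<in> DeltaPlus" and K: "K \<in> DeltaPlus" and a: "a < T (L (ereal p)) (K (ereal q))"
  shows "eventually (\<lambda>v. a < T (L (ereal p)) (K (ereal (v - p)))) (at_left (p + q))"
proof (cases "a < 0")
  case True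
  then show ?thesis using T_range DP_range L K by (auto intro!: always_eventually) (meson less_le_trans)
next
  case False
  define c where "c = L (ereal p)"
  define k0 where "k0 = K (ereal q)"
  have c: "0 \<le> c" "c \<le> 1" using DP_range[OF L] c_def by auto
  have k: "0 \<le> k0" "k0 \<le> 1" using DP_range[OF K] k0_def by auto
  have k0pos: "0 < k0"
  proof (rule ccontr)
    assume "\<not> 0 < k0" then have "k0 = 0" using k by auto
    then show False using a False T_zero2 c unfolding c_def k0_def by auto
  qed
  have lim: "((\<lambda>w. T w c) \<longlongrightarrow> T k0 c) (at_left k0)" using T_lc c k0pos k by auto
  have "a < T k0 c" using a T_comm c k unfolding c_def k0_def by auto
  then have "eventually (\<lambda>w. a < T w c) (at_left k0)" using order_tendstoD(1)[OF lim] by auto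
  then obtain b where b: "b < k0" "\<forall>w>b. w < k0 \<longrightarrow> a < T w c" unfolding eventually_at_left_field by auto
  define w0 where "w0 = max ((b + k0)/2) (k0/2)"
  have w0: "b < w0" "w0 < k0" "0 < w0" using b k0pos unfolding w0_def by (auto simp: max_def)
  have aw: "a < T w0 c" using b w0 by auto
  have "eventually (\<lambda>s. w0 < K (ereal s)) (at_left q)" using order_tendstoD(1)[OF DP_lc[OF K, of q]] w0 k0_def by auto
  then obtain b2 where b2: "b2 < q" "\<forall>s>b2. s < q \<longrightarrow> w0 < K (ereal s)" unfolding eventually_at_left_field by auto
  show ?thesis unfolding eventually_at_left_field
  proof (intro exI[of _ "b2 + p"] conjI allI impI)
    show "b2 + p < p + q" using b2 by auto
    fix v assume v: "b2 + p < v" "v < p + q"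
    then have kv: "w0 < K (ereal (v - p))" using b2 by auto
    have "T w0 c = T c w0" using T_comm c w0 k by auto
    also have "\<dots> \<le> T c (K (ereal (v - p)))" using T_mono[of c c w0] c w0 kv DP_range[OF K] by auto
    finally show "a < T (L (ereal p)) (K (ereal (v - p)))" using aw c_def by auto
  qed
qed

end

lemma DSup_ge: "F \<in> A \<Longrightarrow> (\<And>G. G \<in> A \<Longrightarrow> G t \<le> 1) \<Longrightarrow> F t \<le> DSup A t"
  unfolding DSup_def by (rule cSup_upper) (auto intro!: bdd_aboveI[of _ 1])

lemma DSup_le: "A \<noteq> {} \<Longrightarrow> (\<And>G. G \<in> A \<Longrightarrow> G t \<le> c) \<Longrightarrow> DSup A t \<le> c"
  unfolding DSup_def by (rule cSup_least) auto

context LT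
begin

lemma odot_ge:
  assumes f: "\<And>x. f x \<in> DeltaPlus" and g: "\<And>x. g x \<in> DeltaPlus" and yz: "y + z = x"
  shows "conv T (f y) (g z) t \<le> odot T f g x t"
  unfolding odot_def
  by (rule DSup_ge) (use yz conv_range f g in auto)

lemma odot_le:
  assumes f: "\<And>x. f x \<in> DeltaPlus" and g: "\<And>x. g x \<in> DeltaPlus"
    and le: "\<And>y z. y + z = x \<Longrightarrow> conv T (f y) (g z) t \<le> c"
  shows "odot T f g x t \<le> c"
  unfolding odot_def
proof (rule DSup_le)
  show "{conv T (f y) (g z) |y z. y + z = x} \<noteq> {}" using add_0_right[of x] by blast
qed (use le in auto)

lemma odot_range:
  assumes f: "\<And>x. f x \<in> DeltaPlus" and g: "\<And>x. g x \<in> DeltaPlus"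
  shows "0 \<le> odot T f g x t \<and> odot T f g x t \<le> 1"
proof
  have "conv T (f x) (g 0) t \<le> odot T f g x t" by (rule odot_ge[OF f g]) simp
  then show "0 \<le> odot T f g x t" using conv_range[OF f g, of x 0 t] by auto
  show "odot T f g x t \<le> 1" by (rule odot_le[OF f g]) (use conv_range f g in auto)
qed

end

lemma LipD1: "f \<in> Lip T D \<Longrightarrow> f x \<in> DeltaPlus"
  unfolding Lip_def by auto
lemma LipD2: "f \<in> Lip T D \<Longrightarrow> conv T (D x y) (f y) t \<le> f x t"
  unfolding Lip_def by (auto simp: le_fun_def)

locale MG = LT +
  fixes D :: "'a::group_add \<Rightarrow> 'a \<Rightarrow> dfun"
  assumes mg: "menger_group T D" and inv: "invariant D"
begin

lemma D_DP: "D p q \<in> DeltaPlus" using mg unfolding menger_group_def by blast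
lemma D_eq: "D p q = H0 \<longleftrightarrow> p = q" using mg unfolding menger_group_def by blast
lemma D_self: "D p p = H0" using D_eq by blast
lemma D_sym: "D p q = D q p" using mg unfolding menger_group_def by blast
lemma D_tri: "conv T (D p q) (D q r) t \<le> D p r t"
proof -
  have "conv T (D p q) (D q r) \<le> D p r" using mg unfolding menger_group_def by blast
  then show ?thesis by (simp add: le_fun_def)
qed
lemma D_rinv: "D (p + r) (q + r) = D p q" using inv unfolding invariant_def by blast
lemma D_linv: "D (r + p) (r + q) = D p q" using inv unfolding invariant_def by blast

lemma D_Lip: "D a \<in> Lip T D"
proof -
  have "conv T (D x y) (D a y) \<le> D a x" for x y
  proof -
    have "conv T (D x y) (D y a) t \<le> D x a t" for t by (rule D_tri)
    then show ?thesis unfolding le_fun_def using D_sym[of a y] D_sym[of a x] by simp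
  qed
  then show ?thesis unfolding Lip_def using D_DP by blast
qed

lemma D_inj: assumes "D a = D b" shows "a = b"
proof -
  have "D b a = H0" using D_self[of a] assms by simp
  then show ?thesis using D_eq[of b a] by simp
qed

lemma odot_D: "odot T (D a) (D b) = D (a + b)"
proof (intro ext antisym)
  fix x t
  show "odot T (D a) (D b) x t \<le> D (a + b) x t"
  proof (rule odot_le[OF D_DP D_DP])
    fix y z assume yz: "y + z = x"
    have 1: "D a y = D (a + z) x" using D_rinv[of a z y] yz by simp
    have 2: "D b z = D (a + b) (a + z)" using D_linv[of a b z] by (simp add: add.assoc)
    show "conv T (D a y) (D b z) t \<le> D (a + b) x t"
      using D_tri[of "a + b" "a + z" x t] conv_comm[OF D_DP[of "a+z" x] D_DP[of "a+b" "a+z"]] 1 2 by simp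
  qed
  have "D (a + b) x = D b (- a + x)" using D_linv[of a b "-a + x"] by (simp add: add.assoc[symmetric])
  also have "\<dots> = conv T (D a a) (D b (-a + x))" using conv_H0[OF D_DP] D_self by simp
  finally have "D (a + b) x t = conv T (D a a) (D b (- a + x)) t" by simp
  also have "\<dots> \<le> odot T (D a) (D b) x t"
    by (rule odot_ge[OF D_DP D_DP]) (simp add: add.assoc[symmetric])
  finally show "D (a + b) x t \<le> odot T (D a) (D b) x t" .
qed

lemma odot_e_left: assumes f: "f \<in> Lip T D" shows "odot T (D 0) f = f"
proof (intro ext antisym)
  fix x t
  show "odot T (D 0) f x t \<le> f x t"
  proof (rule odot_le[OF D_DP LipD1[OF f]])
    fix y z assume yz: "y + z = x"
    have 1: "D 0 y = D x z" using D_rinv[of 0 z y] yz D_sym[of z x] by simp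
    show "conv T (D 0 y) (f z) t \<le> f x t" using 1 LipD2[OF f] by simp
  qed
  have "f x t = conv T (D 0 0) (f x) t" using conv_H0[OF LipD1[OF f]] D_self by simp
  also have "\<dots> \<le> odot T (D 0) f x t" by (rule odot_ge[OF D_DP LipD1[OF f]]) simp
  finally show "f x t \<le> odot T (D 0) f x t" .
qed

lemma odot_e_right: assumes f: "f \<in> Lip T D" shows "odot T f (D 0) = f"
proof (intro ext antisym)
  fix x t
  show "odot T f (D 0) x t \<le> f x t"
  proof (rule odot_le[OF LipD1[OF f] D_DP])
    fix y z assume yz: "y + z = x"
    have 1: "D 0 z = D x y" using D_linv[of y 0 z] yz D_sym[of y x] by simp
    show "conv T (f y) (D 0 z) t \<le> f x t" using 1 LipD2[OF f, of x y t] conv_comm[OF LipD1[OF f] D_DP[of x y]] by simp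
  qed
  have "f x t = conv T (f x) (D 0 0) t" using conv_H0'[OF LipD1[OF f]] D_self by simp
  also have "\<dots> \<le> odot T f (D 0) x t" by (rule odot_ge[OF LipD1[OF f] D_DP]) simp
  finally show "f x t \<le> odot T f (D 0) x t" .
qed

lemma D_PiG: "D a \<in> PiG T D"
  unfolding PiG_def
proof (intro CollectI conjI exI[of _ "\<lambda>n. a"] D_Lip allI)
  show "cauchy_seq D (\<lambda>n. a)" unfolding cauchy_seq_def wconv_def by (simp add: D_self)
  show "wconv (\<lambda>n. D a x) (D a x) sequentially" for x unfolding wconv_def by simp
qed

lemma DD_D: "DD T (D a) (D b) = D a b"
proof (intro ext antisym)
  fix t
  show "DD T (D a) (D b) t \<le> D a b t"
    unfolding DD_def
  proof (rule DSup_le)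
    fix G assume "G \<in> range (\<lambda>x. conv T (D a x) (D b x))"
    then obtain x where "G = conv T (D a x) (D b x)" by auto
    then show "G t \<le> D a b t" using D_tri[of a x b t] D_sym[of b x] by simp
  qed simp
  have "D a b t = conv T (D a a) (D b a) t" using conv_H0[OF D_DP] D_self D_sym[of a b] by simp
  also have "\<dots> \<le> DD T (D a) (D b) t"
    unfolding DD_def by (rule DSup_ge) (use conv_range D_DP in auto)
  finally show "D a b t \<le> DD T (D a) (D b) t" .
qed

lemma Dbar_D: "Dbar T D (D a) (D b) = D a b"
  unfolding Dbar_def using D_PiG DD_D by simp

end

context MG
begin

lemma odot_DP:
  assumes f: "f \<in> Lip T D" and g: "g \<in> Lip T D"
  shows "odot T f g x \<in> DeltaPlus"
proof -
  note fD = LipD1[OF f] and gD = LipD1[OF g]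
  define h where "h = odot T f g x"
  have rng: "0 \<le> h t \<and> h t \<le> 1" for t unfolding h_def by (rule odot_range[OF fD gD])
  have mono: "h t \<le> h t'" if tt: "t \<le> t'" for t t'
    unfolding h_def
  proof (rule odot_le[OF fD gD])
    fix y z assume yz: "y + z = x"
    have "conv T (f y) (g z) t \<le> conv T (f y) (g z) t'" by (rule conv_mono[OF fD gD tt])
    also have "\<dots> \<le> odot T f g x t'" by (rule odot_ge[OF fD gD yz])
    finally show "conv T (f y) (g z) t \<le> odot T f g x t'" .
  qed
  have minf: "h (-\<infinity>) = 0"
  proof -
    have "h (-\<infinity>) \<le> 0" unfolding h_def by (rule odot_le[OF fD gD]) (simp add: conv_minf[OF fD gD])
    then show ?thesis using rng[of "-\<infinity>"] by auto
  qed
  have pinf: "h \<infinity> = 1"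
  proof -
    have "conv T (f x) (g 0) \<infinity> \<le> h \<infinity>" unfolding h_def by (rule odot_ge[OF fD gD]) simp
    then show ?thesis using rng[of \<infinity>] conv_inf[OF fD gD] by auto
  qed
  have zero: "h 0 = 0"
  proof -
    have "h 0 \<le> 0" unfolding h_def by (rule odot_le[OF fD gD]) (simp add: conv_0[OF fD gD])
    then show ?thesis using rng[of 0] by auto
  qed
  have lc: "((\<lambda>s. h (ereal s)) \<longlongrightarrow> h (ereal x0)) (at_left x0)" for x0
  proof (rule order_tendstoI)
    fix a assume a: "a < h (ereal x0)"
    define A where "A = {conv T (f y) (g z) |y z. y + z = x}"
    have hA: "h (ereal x0) = Sup ((\<lambda>F. F (ereal x0)) ` A)" unfolding h_def odot_def DSup_def A_def by simp
    have Ane: "(\<lambda>F. F (ereal x0)) ` A \<noteq> {}" unfolding A_def using add_0_right[of x] by blast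
    obtain b where b: "b \<in> (\<lambda>F. F (ereal x0)) ` A" "a < b" using less_cSupE[OF a[unfolded hA] Ane] by blast
    then obtain y z where yz: "y + z = x" and ab: "a < conv T (f y) (g z) (ereal x0)" unfolding A_def by auto
    define S where "S = {T (f y s) (g z u) |s u. s + u = ereal x0}"
    have Sne: "S \<noteq> {}" unfolding S_def using add_0_right[of "ereal x0"] by blast
    have "a < Sup S" using ab unfolding conv_def S_def by simp
    then obtain w where w: "w \<in> S" "a < w" using less_cSupE[OF _ Sne] by blast
    then obtain s u where su: "s + u = ereal x0" "a < T (f y s) (g z u)" unfolding S_def by auto
    then obtain p q where pq: "s = ereal p" "u = ereal q" "p + q = x0" using ereal_sum_fin by blast
    have ev: "eventually (\<lambda>v. a < T (f y (ereal p)) (g z (ereal (v - p)))) (at_left (p + q))"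
      by (rule conv_lc_witness[OF fD gD]) (use su pq in simp)
    have ev': "eventually (\<lambda>v. a < T (f y (ereal p)) (g z (ereal (v - p)))) (at_left x0)"
      using ev pq(3) by simp
    show "eventually (\<lambda>v. a < h (ereal v)) (at_left x0)"
      using ev'
    proof (rule eventually_mono)
      fix v assume "a < T (f y (ereal p)) (g z (ereal (v - p)))"
      also have "\<dots> \<le> conv T (f y) (g z) (ereal v)" by (rule conv_ge[OF fD gD]) simp
      also have "\<dots> \<le> h (ereal v)" unfolding h_def by (rule odot_ge[OF fD gD yz])
      finally show "a < h (ereal v)" .
    qed
  next
    fix a assume a: "h (ereal x0) < a"
    show "eventually (\<lambda>v. h (ereal v) < a) (at_left x0)"
      unfolding eventually_at_left_field
    proof (intro exI[of _ "x0 - 1"] conjI allI impI)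
      fix v assume "v < x0"
      then have "h (ereal v) \<le> h (ereal x0)" using mono by simp
      then show "h (ereal v) < a" using a by simp
    qed simp
  qed
  show ?thesis unfolding h_def[symmetric] DeltaPlus_def distfun_def
    using rng mono minf pinf zero lc by (auto simp: mono_def)
qed

lemma odot_Lip:
  assumes f: "f \<in> Lip T D" and g: "g \<in> Lip T D"
  shows "odot T f g \<in> Lip T D"
proof -
  note fD = LipD1[OF f] and gD = LipD1[OF g]
  have hD: "odot T f g x \<in> DeltaPlus" for x by (rule odot_DP[OF f g])
  have main: "conv T (D x y) (odot T f g y) t \<le> odot T f g x t" for x y t
  proof (rule conv_le[OF D_DP hD])
    fix s u assume su: "s + u = t"
    define B where "B = (\<lambda>F. F u) ` {conv T (f y1) (g z1) |y1 z1. y1 + z1 = y}"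
    have hy: "odot T f g y u = Sup B" unfolding odot_def DSup_def B_def by simp
    have Bne: "B \<noteq> {}" unfolding B_def using add_0_right[of y] by blast
    have Brng: "0 \<le> b \<and> b \<le> 1" if "b \<in> B" for b using that conv_range[OF fD gD] unfolding B_def by auto
    have Dr: "0 \<le> D x y s" "D x y s \<le> 1" using DP_range[OF D_DP] by auto
    show "T (D x y s) (odot T f g y u) \<le> odot T f g x t"
      unfolding hy
    proof (rule T_Sup_le[OF Dr Bne Brng])
      fix b assume "b \<in> B"
      then obtain y1 z1 where yz: "y1 + z1 = y" and bdef: "b = conv T (f y1) (g z1) u" unfolding B_def by auto
      define C where "C = {T (f y1 s1) (g z1 u1) |s1 u1. s1 + u1 = u}"
      have bC: "b = Sup C" unfolding bdef conv_def C_def by simp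
      have Cne: "C \<noteq> {}" unfolding C_def using add_0_right[of u] by blast
      have Crng: "0 \<le> c \<and> c \<le> 1" if "c \<in> C" for c using that T_range DP_range fD gD unfolding C_def by blast
      show "T (D x y s) b \<le> odot T f g x t"
        unfolding bC
      proof (rule T_Sup_le[OF Dr Cne Crng])
        fix c assume "c \<in> C"
        then obtain s1 u1 where s1u1: "s1 + u1 = u" and cdef: "c = T (f y1 s1) (g z1 u1)" unfolding C_def by auto
        define y' where "y' = x + - z1"
        have y'z: "y' + z1 = x" unfolding y'_def by (simp add: add.assoc)
        have Dxy: "D x y = D y' y1" using D_rinv[of y' z1 y1] y'z yz by simp
        have r1: "0 \<le> f y1 s1" "f y1 s1 \<le> 1" "0 \<le> g z1 u1" "g z1 u1 \<le> 1" using DP_range fD gD by auto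
        have r2: "0 \<le> T (D x y s) (f y1 s1)" "T (D x y s) (f y1 s1) \<le> 1" using T_range Dr r1 by auto
        have "T (D x y s) c = T (T (D x y s) (f y1 s1)) (g z1 u1)"
          unfolding cdef using T_assoc[of "D x y s" "f y1 s1" "g z1 u1"] Dr r1 by simp
        also have "\<dots> \<le> T (f y' (s + s1)) (g z1 u1)"
        proof (rule T_mono1)
          have "T (D x y s) (f y1 s1) \<le> conv T (D y' y1) (f y1) (s + s1)"
            unfolding Dxy by (rule conv_ge[OF D_DP fD]) simp
          also have "\<dots> \<le> f y' (s + s1)" by (rule LipD2[OF f])
          finally show "T (D x y s) (f y1 s1) \<le> f y' (s + s1)" .
        qed (use r1 r2 DP_range fD in auto)
        also have "\<dots> \<le> conv T (f y') (g z1) t"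
          by (rule conv_ge[OF fD gD]) (use su s1u1 in \<open>simp add: add.assoc\<close>)
        also have "\<dots> \<le> odot T f g x t" by (rule odot_ge[OF fD gD y'z])
        finally show "T (D x y s) c \<le> odot T f g x t" .
      qed
    qed
  qed
  show ?thesis unfolding Lip_def using hD main by (auto simp: le_fun_def)
qed

end

context MG
begin

lemma unit_step1:
  assumes f: "f \<in> Lip T D" and g: "g \<in> Lip T D" and fg: "odot T f g = D 0"
    and t: "0 < t" and e: "0 < e" "e \<le> 1"
  shows "\<exists>y. 1 - e < f y (ereal t) \<and> 1 - e < g (- y) (ereal t)"
proof -
  note fD = LipD1[OF f] and gD = LipD1[OF g]
  define A where "A = {conv T (f y) (g z) |y z. y + z = 0}"
  have "odot T f g 0 (ereal t) = D 0 0 (ereal t)" using fg by simp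
  also have "\<dots> = 1" using t by (simp add: D_self H0_def)
  finally have h1: "Sup ((\<lambda>F. F (ereal t)) ` A) = 1" unfolding odot_def DSup_def A_def by simp
  have Ane: "(\<lambda>F. F (ereal t)) ` A \<noteq> {}" unfolding A_def using add_0_right[of "0::'a"] by blast
  have "1 - e < Sup ((\<lambda>F. F (ereal t)) ` A)" using h1 e by simp
  then obtain b where "b \<in> (\<lambda>F. F (ereal t)) ` A" "1 - e < b" using less_cSupE[OF _ Ane] by blast
  then obtain y z where yz: "y + z = 0" and ab: "1 - e < conv T (f y) (g z) (ereal t)" unfolding A_def by auto
  have z: "z = - y" using yz neg_eq_iff_add_eq_0[of y z] by simp
  define S where "S = {T (f y s) (g z u) |s u. s + u = ereal t}"
  have Sne: "S \<noteq> {}" unfolding S_def using add_0_right[of "ereal t"] by blast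
  have "1 - e < Sup S" using ab unfolding conv_def S_def by simp
  then obtain w where w: "w \<in> S" "1 - e < w" using less_cSupE[OF _ Sne] by blast
  then obtain s u where su: "s + u = ereal t" "1 - e < T (f y s) (g z u)" unfolding S_def by auto
  then obtain p q where pq: "s = ereal p" "u = ereal q" "p + q = t" using ereal_sum_fin by blast
  have r: "0 \<le> f y s" "f y s \<le> 1" "0 \<le> g z u" "g z u \<le> 1" using DP_range fD gD by auto
  have 1: "1 - e < f y s" using su(2) T_le1[OF r] by linarith
  have 2: "1 - e < g z u" using su(2) T_le2[OF r] by linarith
  have qpos: "0 < q"
  proof (rule ccontr)
    assume "\<not> 0 < q" then have "g z u = 0" using DP_nonpos[OF gD] pq by auto
    then show False using 2 e by auto
  qed
  have ppos: "0 < p"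
  proof (rule ccontr)
    assume "\<not> 0 < p" then have "f y s = 0" using DP_nonpos[OF fD] pq by auto
    then show False using 1 e by auto
  qed
  have "f y s \<le> f y (ereal t)" using DP_mono[OF fD] pq qpos by auto
  moreover have "g z u \<le> g z (ereal t)" using DP_mono[OF gD] pq ppos by auto
  ultimately show ?thesis using 1 2 z by (intro exI[of _ y]) auto
qed

lemma H0_isCont: "0 < t \<Longrightarrow> isCont (\<lambda>x. H0 (ereal x)) t"
proof -
  assume t: "0 < t"
  have "eventually (\<lambda>x. 0 < x) (at t)" using order_tendstoD(1)[OF tendsto_ident_at t] by simp
  then have "eventually (\<lambda>x. H0 (ereal x) = H0 (ereal t)) (at t)"
    by (rule eventually_mono) (use t in \<open>simp add: H0_def\<close>)
  then show ?thesis unfolding isCont_def by (rule tendsto_eventually)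
qed

lemma le_by_eps: assumes "(\<And>e::real. 0 < e \<Longrightarrow> c - e < x)" shows "c \<le> x"
proof (rule ccontr)
  assume "\<not> c \<le> x"
  then have "0 < c - x" by simp
  from assms[OF this] show False by simp
qed

lemma unit_D:
  assumes comp: "complete_mg D" and f: "f \<in> Lip T D" and g: "g \<in> Lip T D" and fg: "odot T f g = D 0"
  shows "\<exists>a. f = D a"
proof -
  note fD = LipD1[OF f] and gD = LipD1[OF g]
  have "\<forall>n::nat. \<exists>y. 1 - 1 / (real n + 1) < f y (ereal (1 / (real n + 1)))
          \<and> 1 - 1 / (real n + 1) < g (- y) (ereal (1 / (real n + 1)))"
  proof
    fix n :: nat
    show "\<exists>y. 1 - 1 / (real n + 1) < f y (ereal (1 / (real n + 1)))
          \<and> 1 - 1 / (real n + 1) < g (- y) (ereal (1 / (real n + 1)))"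
      by (rule unit_step1[OF f g fg]) (auto simp: field_simps)
  qed
  from choice[OF this] obtain Y where Y0: "\<forall>n. 1 - 1 / (real n + 1) < f (Y n) (ereal (1 / (real n + 1)))
          \<and> 1 - 1 / (real n + 1) < g (- Y n) (ereal (1 / (real n + 1)))" by blast
  note Y = Y0[rule_format]
  have Ybig: "1 - 1 / (real n + 1) < f (Y n) (ereal t) \<and> 1 - 1 / (real n + 1) < g (- Y n) (ereal t)"
    if "1 / (real n + 1) \<le> t" for n t
    using Y[of n] DP_mono[OF fD, of "ereal (1 / (real n + 1))" "ereal t" "Y n"]
      DP_mono[OF gD, of "ereal (1 / (real n + 1))" "ereal t" "- Y n"] that by auto
  have small: "\<exists>N::nat. 1 / (real N + 1) < d" if dpos: "0 < d" for d :: real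
  proof -
    obtain n where "inverse (real (Suc n)) < d" using reals_Archimedean[OF dpos] by blast
    then show ?thesis by (intro exI[of _ n]) (simp add: field_simps)
  qed
  have mono_inv: "1 / (real n + 1) \<le> 1 / (real N + 1)" if "N \<le> n" for n N :: nat
    using that by (simp add: frac_le)
  have DY: "D (Y n) (Y m) (ereal t) \<ge> T (f (Y m) (ereal (t/2))) (g (- Y n) (ereal (t/2)))" for n m t
  proof -
    have "D (Y n) (Y m) = odot T f g (Y m + - Y n)"
      using fg D_rinv[of 0 "Y n" "Y m + - Y n"] by (simp add: add.assoc)
    moreover have "T (f (Y m) (ereal (t/2))) (g (- Y n) (ereal (t/2))) \<le> conv T (f (Y m)) (g (- Y n)) (ereal t)"
      by (rule conv_ge[OF fD gD]) simp
    moreover have "conv T (f (Y m)) (g (- Y n)) (ereal t) \<le> odot T f g (Y m + - Y n) (ereal t)"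
      by (rule odot_ge[OF fD gD]) simp
    ultimately show ?thesis by simp
  qed
  have cauchy: "cauchy_seq D Y"
    unfolding cauchy_seq_def wconv_def
  proof (intro allI impI)
    fix t :: real
    show "((\<lambda>i. (case i of (n, p) \<Rightarrow> D (Y n) (Y p)) (ereal t)) \<longlongrightarrow> H0 (ereal t)) (sequentially \<times>\<^sub>F sequentially)"
    proof (cases "t \<le> 0")
      case True
      have "(\<lambda>i. (case i of (n, p) \<Rightarrow> D (Y n) (Y p)) (ereal t)) = (\<lambda>i. 0)"
        using DP_nonpos[OF D_DP] True by (auto split: prod.splits)
      then show ?thesis using True by (simp add: H0_def)
    next
      case False
      then have t: "0 < t" by simp
      show ?thesis
      proof (rule order_tendstoI)
        fix a assume a: "a < H0 (ereal t)"
        then have a1: "a < 1" using t by (simp add: H0_def)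
        obtain d where d: "d > 0" "\<forall>x y. 1 - d < x \<longrightarrow> x \<le> 1 \<longrightarrow> 1 - d < y \<longrightarrow> y \<le> 1 \<longrightarrow> 1 - (1 - a) < T x y"
          using T_near1[of "1 - a"] a1 by auto
        obtain N where N: "1 / (real N + 1) < min d (t/2)" using small[of "min d (t/2)"] d t by auto
        show "eventually (\<lambda>i. a < (case i of (n, p) \<Rightarrow> D (Y n) (Y p)) (ereal t)) (sequentially \<times>\<^sub>F sequentially)"
          unfolding eventually_prod_sequentially
        proof (intro exI[of _ N] allI impI)
          fix m n assume mn: "N \<le> m" "N \<le> n"
          have b1: "1 - d < f (Y m) (ereal (t/2))"
            using Ybig[of m "t/2"] mono_inv[OF mn(1)] N by auto
          have b2: "1 - d < g (- Y n) (ereal (t/2))"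
            using Ybig[of n "t/2"] mono_inv[OF mn(2)] N by auto
          have "a < T (f (Y m) (ereal (t/2))) (g (- Y n) (ereal (t/2)))"
            using d b1 b2 DP_range fD gD by auto
          also have "\<dots> \<le> D (Y n) (Y m) (ereal t)" by (rule DY)
          finally show "a < (case (n, m) of (n, p) \<Rightarrow> D (Y n) (Y p)) (ereal t)" by simp
        qed
      next
        fix a assume a: "H0 (ereal t) < a"
        then have "1 < a" using t by (simp add: H0_def)
        show "eventually (\<lambda>i. (case i of (n, p) \<Rightarrow> D (Y n) (Y p)) (ereal t) < a) (sequentially \<times>\<^sub>F sequentially)"
        proof (intro always_eventually allI)
          fix i :: "nat \<times> nat"
          show "(case i of (n, p) \<Rightarrow> D (Y n) (Y p)) (ereal t) < a"
            using DP_range[OF D_DP, of "Y (fst i)" "Y (snd i)" "ereal t"] \<open>1 < a\<close> by (cases i) simp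
        qed
      qed
    qed
  qed
  obtain a where a: "wconv (\<lambda>n. D (Y n) a) H0 sequentially" using comp cauchy unfolding complete_mg_def by blast
  have Dlim: "((\<lambda>n. D a (Y n) (ereal t)) \<longlongrightarrow> 1) sequentially" if "0 < t" for t
  proof -
    have "((\<lambda>n. D (Y n) a (ereal t)) \<longlongrightarrow> H0 (ereal t)) sequentially"
      using a H0_isCont[OF that] unfolding wconv_def by blast
    then show ?thesis using that by (simp add: H0_def D_sym[of a])
  qed
  have evD: "eventually (\<lambda>n. 1 - d < D a (Y n) (ereal t)) sequentially" if "0 < t" "0 < d" for t d
    using order_tendstoD(1)[OF Dlim[OF that(1)]] that(2) by simp
  have evY: "eventually (\<lambda>n. 1 - d < f (Y n) (ereal t) \<and> 1 - d < g (- Y n) (ereal t)) sequentially"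
    if tpos: "0 < t" and dpos: "0 < d" for t d
  proof -
    obtain N where N: "1 / (real N + 1) < min d t" using small[of "min d t"] tpos dpos by auto
    show ?thesis unfolding eventually_sequentially
    proof (intro exI[of _ N] allI impI)
      fix n assume "N \<le> n"
      then have "1 / (real n + 1) < min d t" using mono_inv[of N n] N by linarith
      then show "1 - d < f (Y n) (ereal t) \<and> 1 - d < g (- Y n) (ereal t)"
        using Ybig[of n t] by auto
    qed
  qed
  have key: "f x (ereal r) = D a x (ereal r)" if r: "0 < r" for x r
  proof (rule antisym)
    have "f x (ereal v) \<le> D a x (ereal r)" if v: "v < r" for v
    proof (rule le_by_eps)
      fix e :: real assume e: "0 < e"
      define c where "c = f x (ereal v)"
      define \<delta> where "\<delta> = (r - v) / 2"
      have \<delta>: "0 < \<delta>" using v unfolding \<delta>_def by simp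
      have c: "0 \<le> c" "c \<le> 1" using DP_range fD unfolding c_def by auto
      obtain d where d: "d > 0" "\<forall>a b. 1 - d < a \<longrightarrow> a \<le> 1 \<longrightarrow> 1 - d < b \<longrightarrow> b \<le> 1 \<longrightarrow> c - e < T (T c a) b"
        using T_near_c2[OF c e] by auto
      have "eventually (\<lambda>n. 1 - d < D a (Y n) (ereal \<delta>) \<and> (1 - d < f (Y n) (ereal \<delta>) \<and> 1 - d < g (- Y n) (ereal \<delta>))) sequentially"
        using eventually_conj[OF evD[OF \<delta> d(1)] evY[OF \<delta> d(1)]] .
      then obtain N where "\<forall>n\<ge>N. 1 - d < D a (Y n) (ereal \<delta>) \<and> (1 - d < f (Y n) (ereal \<delta>) \<and> 1 - d < g (- Y n) (ereal \<delta>))"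
        unfolding eventually_sequentially by blast
      then obtain m where m: "1 - d < D a (Y m) (ereal \<delta>)" "1 - d < g (- Y m) (ereal \<delta>)" by blast
      have r1: "0 \<le> D a (Y m) (ereal \<delta>)" "D a (Y m) (ereal \<delta>) \<le> 1" "0 \<le> g (- Y m) (ereal \<delta>)" "g (- Y m) (ereal \<delta>) \<le> 1"
        using DP_range D_DP gD by auto
      have r2: "0 \<le> T c (g (- Y m) (ereal \<delta>))" "T c (g (- Y m) (ereal \<delta>)) \<le> 1" using T_range c r1 by auto
      have "c - e < T (T c (g (- Y m) (ereal \<delta>))) (D a (Y m) (ereal \<delta>))" using d m r1 by auto
      also have "\<dots> = T (D a (Y m) (ereal \<delta>)) (T c (g (- Y m) (ereal \<delta>)))" using T_comm r1 r2 by auto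
      also have "\<dots> \<le> T (D a (Y m) (ereal \<delta>)) (D (Y m) x (ereal (v + \<delta>)))"
      proof (rule T_mono)
        have "T c (g (- Y m) (ereal \<delta>)) \<le> conv T (f x) (g (- Y m)) (ereal (v + \<delta>))"
          unfolding c_def by (rule conv_ge[OF fD gD]) simp
        also have "\<dots> \<le> odot T f g (x + - Y m) (ereal (v + \<delta>))" by (rule odot_ge[OF fD gD]) simp
        also have "\<dots> = D (Y m) x (ereal (v + \<delta>))"
          using fg D_rinv[of 0 "Y m" "x + - Y m"] by (simp add: add.assoc)
        finally show "T c (g (- Y m) (ereal \<delta>)) \<le> D (Y m) x (ereal (v + \<delta>))" .
      qed (use r1 r2 DP_range D_DP in auto)
      also have "\<dots> \<le> conv T (D a (Y m)) (D (Y m) x) (ereal r)"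
        by (rule conv_ge[OF D_DP D_DP]) (simp add: \<delta>_def)
      also have "\<dots> \<le> D a x (ereal r)" by (rule D_tri)
      finally show "f x (ereal v) - e < D a x (ereal r)" unfolding c_def .
    qed
    then show "f x (ereal r) \<le> D a x (ereal r)"
      by (intro tendsto_upperbound[OF DP_lc[OF fD]]) (auto simp: eventually_at_left_field intro!: exI[of _ "r - 1"])
  next
    have "D a x (ereal v) \<le> f x (ereal r)" if v: "v < r" for v
    proof (rule le_by_eps)
      fix e :: real assume e: "0 < e"
      define c where "c = D x a (ereal v)"
      define \<delta> where "\<delta> = (r - v) / 2"
      have \<delta>: "0 < \<delta>" using v unfolding \<delta>_def by simp
      have c: "0 \<le> c" "c \<le> 1" using DP_range D_DP unfolding c_def by auto
      obtain d where d: "d > 0" "\<forall>a b. 1 - d < a \<longrightarrow> a \<le> 1 \<longrightarrow> 1 - d < b \<longrightarrow> b \<le> 1 \<longrightarrow> c - e < T (T c a) b"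
        using T_near_c2[OF c e] by auto
      have "eventually (\<lambda>n. 1 - d < D a (Y n) (ereal \<delta>) \<and> (1 - d < f (Y n) (ereal \<delta>) \<and> 1 - d < g (- Y n) (ereal \<delta>))) sequentially"
        using eventually_conj[OF evD[OF \<delta> d(1)] evY[OF \<delta> d(1)]] .
      then obtain N where "\<forall>n\<ge>N. 1 - d < D a (Y n) (ereal \<delta>) \<and> (1 - d < f (Y n) (ereal \<delta>) \<and> 1 - d < g (- Y n) (ereal \<delta>))"
        unfolding eventually_sequentially by blast
      then obtain m where m: "1 - d < D a (Y m) (ereal \<delta>)" "1 - d < f (Y m) (ereal \<delta>)" by blast
      have r1: "0 \<le> D a (Y m) (ereal \<delta>)" "D a (Y m) (ereal \<delta>) \<le> 1" "0 \<le> f (Y m) (ereal \<delta>)" "f (Y m) (ereal \<delta>) \<le> 1"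
        using DP_range D_DP fD by auto
      have r2: "0 \<le> T c (D a (Y m) (ereal \<delta>))" "T c (D a (Y m) (ereal \<delta>)) \<le> 1" using T_range c r1 by auto
      have "c - e < T (T c (D a (Y m) (ereal \<delta>))) (f (Y m) (ereal \<delta>))" using d m r1 by auto
      also have "\<dots> \<le> T (D x (Y m) (ereal (v + \<delta>))) (f (Y m) (ereal \<delta>))"
      proof (rule T_mono1)
        have "T c (D a (Y m) (ereal \<delta>)) \<le> conv T (D x a) (D a (Y m)) (ereal (v + \<delta>))"
          unfolding c_def by (rule conv_ge[OF D_DP D_DP]) simp
        also have "\<dots> \<le> D x (Y m) (ereal (v + \<delta>))" by (rule D_tri)
        finally show "T c (D a (Y m) (ereal \<delta>)) \<le> D x (Y m) (ereal (v + \<delta>))" .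
      qed (use r1 r2 DP_range D_DP in auto)
      also have "\<dots> \<le> conv T (D x (Y m)) (f (Y m)) (ereal r)"
        by (rule conv_ge[OF D_DP fD]) (simp add: \<delta>_def)
      also have "\<dots> \<le> f x (ereal r)" by (rule LipD2[OF f])
      finally show "D a x (ereal v) - e < f x (ereal r)" unfolding c_def using D_sym[of a x] by simp
    qed
    then show "D a x (ereal r) \<le> f x (ereal r)"
      by (intro tendsto_upperbound[OF DP_lc[OF D_DP]]) (auto simp: eventually_at_left_field intro!: exI[of _ "r - 1"])
  qed
  have "f x t = D a x t" for x t
  proof (cases t)
    case (real r)
    show ?thesis
    proof (cases "r \<le> 0")
      case True then show ?thesis using real DP_nonpos[OF fD] DP_nonpos[OF D_DP] by auto
    next
      case False then show ?thesis using real key by auto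
    qed
  next
    case PInf then show ?thesis using DP_inf[OF fD] DP_inf[OF D_DP] by auto
  next
    case MInf then show ?thesis using DP_minf[OF fD] DP_minf[OF D_DP] by auto
  qed
  then show ?thesis by (intro exI[of _ a]) auto
qed

end

lemma Lip_transfer:
  assumes IJ: "\<And>x'. I (J x') = x'" and JI: "\<And>x. J (I x) = x"
    and iso: "\<And>x y. D' (I x) (I y) = D x y" and f: "f \<in> Lip T D"
  shows "(\<lambda>x'. f (J x')) \<in> Lip T D'"
proof -
  have "D' x' y' = D (J x') (J y')" for x' y' using iso[of "J x'" "J y'"] IJ by simp
  then show ?thesis using f unfolding Lip_def by auto
qed

lemma PiG_transfer:
  assumes IJ: "\<And>x'. I (J x') = x'" and JI: "\<And>x. J (I x) = x"
    and iso: "\<And>x y. D' (I x) (I y) = D x y" and f: "f \<in> PiG T D"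
  shows "(\<lambda>x'. f (J x')) \<in> PiG T D'"
proof -
  obtain a where fL: "f \<in> Lip T D" and ca: "cauchy_seq D a" and wa: "\<And>x. wconv (\<lambda>n. D (a n) x) (f x) sequentially"
    using f unfolding PiG_def by blast
  have c': "cauchy_seq D' (\<lambda>n. I (a n))" using ca unfolding cauchy_seq_def by (simp add: iso)
  have w': "wconv (\<lambda>n. D' (I (a n)) x') (f (J x')) sequentially" for x'
  proof -
    have "D' (I (a n)) x' = D (a n) (J x')" for n using iso[of "a n" "J x'"] IJ by simp
    then show ?thesis using wa[of "J x'"] by simp
  qed
  show ?thesis unfolding PiG_def using Lip_transfer[OF IJ JI iso fL] c' w' by blast
qed

lemma DD_transfer:
  assumes IJ: "\<And>x'. I (J x') = x'" and JI: "\<And>x. J (I x) = x"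
  shows "DD T (\<lambda>x'. f (J x')) (\<lambda>x'. g (J x')) = DD T f g"
proof -
  have "range (\<lambda>x'. conv T (f (J x')) (g (J x'))) = range (\<lambda>x. conv T (f x) (g x))"
  proof
    show "range (\<lambda>x'. conv T (f (J x')) (g (J x'))) \<subseteq> range (\<lambda>x. conv T (f x) (g x))" by auto
    show "range (\<lambda>x. conv T (f x) (g x)) \<subseteq> range (\<lambda>x'. conv T (f (J x')) (g (J x')))"
    proof
      fix F assume "F \<in> range (\<lambda>x. conv T (f x) (g x))"
      then obtain x where "F = conv T (f x) (g x)" by auto
      then have "F = conv T (f (J (I x))) (g (J (I x)))" using JI by simp
      then show "F \<in> range (\<lambda>x'. conv T (f (J x')) (g (J x')))" by blast
    qed
  qed
  then show ?thesis unfolding DD_def by simp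
qed

lemma odot_transfer:
  fixes I :: "'a::group_add \<Rightarrow> 'b::group_add"
  assumes IJ: "\<And>x'. I (J x') = x'" and JI: "\<And>x. J (I x) = x"
    and hom: "\<And>x y. I (x + y) = I x + I y"
  shows "odot T (\<lambda>x'. f (J x')) (\<lambda>x'. g (J x')) = (\<lambda>x'. odot T f g (J x'))"
proof
  fix x'
  have homJ: "J (y' + z') = J y' + J z'" for y' z'
    using hom[of "J y'" "J z'"] IJ JI by (metis)
  have "{conv T (f (J y')) (g (J z')) |y' z'. y' + z' = x'} = {conv T (f y) (g z) |y z. y + z = J x'}"
  proof (intro set_eqI iffI)
    fix F assume "F \<in> {conv T (f (J y')) (g (J z')) |y' z'. y' + z' = x'}"
    then obtain y' z' where yz: "y' + z' = x'" "F = conv T (f (J y')) (g (J z'))" by blast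
    then have "J y' + J z' = J x'" using homJ[of y' z'] by simp
    then show "F \<in> {conv T (f y) (g z) |y z. y + z = J x'}" using yz by blast
  next
    fix F assume "F \<in> {conv T (f y) (g z) |y z. y + z = J x'}"
    then obtain y z where yz: "y + z = J x'" "F = conv T (f y) (g z)" by blast
    then have "I y + I z = x'" using hom[of y z] IJ by simp
    moreover have "F = conv T (f (J (I y))) (g (J (I z)))" using yz JI by simp
    ultimately show "F \<in> {conv T (f (J y')) (g (J z')) |y' z'. y' + z' = x'}" by blast
  qed
  then show "odot T (\<lambda>x'. f (J x')) (\<lambda>x'. g (J x')) x' = odot T f g (J x')"
    unfolding odot_def by simp
qed

theorem mainTheorem19:
  fixes T :: "real \<Rightarrow> real \<Rightarrow> real"
    and D :: "'a::group_add \<Rightarrow> 'a \<Rightarrow> dfun"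
    and D' :: "'b::group_add \<Rightarrow> 'b \<Rightarrow> dfun"
  assumes "left_cont_tnorm T"
    and "menger_group T D" and "invariant D" and "complete_mg D"
    and "menger_group T D'" and "invariant D'" and "complete_mg D'"
  shows "(\<exists>I :: 'a \<Rightarrow> 'b. bij I \<and> (\<forall>x y. I (x + y) = I x + I y)
            \<and> (\<forall>x y. D' (I x) (I y) = D x y))
     \<longleftrightarrow>
         (\<exists>\<Phi> :: ('a \<Rightarrow> dfun) \<Rightarrow> ('b \<Rightarrow> dfun).
            bij_betw \<Phi> (Lip T D) (Lip T D')
          \<and> (\<forall>f\<in>Lip T D. \<forall>g\<in>Lip T D. \<Phi> (odot T f g) = odot T (\<Phi> f) (\<Phi> g))
          \<and> (\<forall>f\<in>Lip T D. \<forall>g\<in>Lip T D. Dbar T D' (\<Phi> f) (\<Phi> g) = Dbar T D f g))"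
proof -
  interpret A: MG T D using assms by (simp add: MG_def LT_def MG_axioms_def)
  interpret B: MG T D' using assms by (simp add: MG_def LT_def MG_axioms_def)
  show ?thesis
  proof
    assume "\<exists>I :: 'a \<Rightarrow> 'b. bij I \<and> (\<forall>x y. I (x + y) = I x + I y) \<and> (\<forall>x y. D' (I x) (I y) = D x y)"
    then obtain I :: "'a \<Rightarrow> 'b" where bI: "bij I" and hom: "\<And>x y. I (x + y) = I x + I y"
      and iso: "\<And>x y. D' (I x) (I y) = D x y" by blast
    define J where "J = inv I"
    have IJ: "\<And>x'. I (J x') = x'" unfolding J_def using bI by (simp add: bij_is_surj surj_f_inv_f)
    have JI: "\<And>x. J (I x) = x" unfolding J_def using bI by (simp add: bij_is_inj)
    have isoJ: "\<And>x' y'. D (J x') (J y') = D' x' y'" using iso IJ by metis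
    have homJ: "\<And>x' y'. J (x' + y') = J x' + J y'" using hom IJ JI by metis
    define \<Phi> where "\<Phi> = (\<lambda>f :: 'a \<Rightarrow> dfun. \<lambda>x'. f (J x'))"
    have bb: "bij_betw \<Phi> (Lip T D) (Lip T D')"
    proof (rule bij_betw_byWitness[where f' = "\<lambda>h x. h (I x)"])
      show "\<forall>a\<in>Lip T D. (\<lambda>x. \<Phi> a (I x)) = a" unfolding \<Phi>_def using JI by simp
      show "\<forall>a'\<in>Lip T D'. \<Phi> (\<lambda>x. a' (I x)) = a'" unfolding \<Phi>_def using IJ by simp
      show "\<Phi> ` Lip T D \<subseteq> Lip T D'" unfolding \<Phi>_def using Lip_transfer[where I=I and J=J and D=D and D'=D', OF IJ JI iso] by blast
      show "(\<lambda>h x. h (I x)) ` Lip T D' \<subseteq> Lip T D" using Lip_transfer[where I=J and J=I and D=D' and D'=D, OF JI IJ isoJ] by blast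
    qed
    have od: "\<Phi> (odot T f g) = odot T (\<Phi> f) (\<Phi> g)" for f g
      unfolding \<Phi>_def using odot_transfer[where I=I and J=J, OF IJ JI hom] by simp
    have db: "Dbar T D' (\<Phi> f) (\<Phi> g) = Dbar T D f g" for f g
    proof -
      have PiG_iff: "\<Phi> h \<in> PiG T D' \<longleftrightarrow> h \<in> PiG T D" for h
      proof
        assume "\<Phi> h \<in> PiG T D'"
        from PiG_transfer[where I=J and J=I and D=D' and D'=D, OF JI IJ isoJ this] show "h \<in> PiG T D" unfolding \<Phi>_def using JI by simp
      next
        assume "h \<in> PiG T D"
        from PiG_transfer[where I=I and J=J and D=D and D'=D', OF IJ JI iso this] show "\<Phi> h \<in> PiG T D'" unfolding \<Phi>_def .
      qed
      have eq_iff: "\<Phi> f = \<Phi> g \<longleftrightarrow> f = g"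
      proof
        assume "\<Phi> f = \<Phi> g"
        then have "(\<lambda>x. \<Phi> f (I x)) = (\<lambda>x. \<Phi> g (I x))" by simp
        then show "f = g" unfolding \<Phi>_def using JI by simp
      qed simp
      have "DD T (\<Phi> f) (\<Phi> g) = DD T f g" unfolding \<Phi>_def by (rule DD_transfer[where I=I and J=J, OF IJ JI])
      then show ?thesis unfolding Dbar_def using PiG_iff eq_iff by simp
    qed
    show "\<exists>\<Phi> :: ('a \<Rightarrow> dfun) \<Rightarrow> ('b \<Rightarrow> dfun).
            bij_betw \<Phi> (Lip T D) (Lip T D')
          \<and> (\<forall>f\<in>Lip T D. \<forall>g\<in>Lip T D. \<Phi> (odot T f g) = odot T (\<Phi> f) (\<Phi> g))
          \<and> (\<forall>f\<in>Lip T D. \<forall>g\<in>Lip T D. Dbar T D' (\<Phi> f) (\<Phi> g) = Dbar T D f g)"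
      using bb od db by blast
  next
    assume "\<exists>\<Phi> :: ('a \<Rightarrow> dfun) \<Rightarrow> ('b \<Rightarrow> dfun).
            bij_betw \<Phi> (Lip T D) (Lip T D')
          \<and> (\<forall>f\<in>Lip T D. \<forall>g\<in>Lip T D. \<Phi> (odot T f g) = odot T (\<Phi> f) (\<Phi> g))
          \<and> (\<forall>f\<in>Lip T D. \<forall>g\<in>Lip T D. Dbar T D' (\<Phi> f) (\<Phi> g) = Dbar T D f g)"
    then obtain \<Phi> :: "('a \<Rightarrow> dfun) \<Rightarrow> ('b \<Rightarrow> dfun)" where bb: "bij_betw \<Phi> (Lip T D) (Lip T D')"
      and od: "\<And>f g. f \<in> Lip T D \<Longrightarrow> g \<in> Lip T D \<Longrightarrow> \<Phi> (odot T f g) = odot T (\<Phi> f) (\<Phi> g)"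
      and db: "\<And>f g. f \<in> Lip T D \<Longrightarrow> g \<in> Lip T D \<Longrightarrow> Dbar T D' (\<Phi> f) (\<Phi> g) = Dbar T D f g"
      by blast
    have img: "\<Phi> ` Lip T D = Lip T D'" using bb by (simp add: bij_betw_def)
    have injP: "inj_on \<Phi> (Lip T D)" using bb by (simp add: bij_betw_def)
    have inL: "\<Phi> f \<in> Lip T D'" if "f \<in> Lip T D" for f using img that by blast
    have pre: "\<exists>f\<in>Lip T D. \<Phi> f = h" if "h \<in> Lip T D'" for h using img that by (metis imageE)
    have e: "\<Phi> (D 0) = D' 0"
    proof -
      obtain h where h: "h \<in> Lip T D" "\<Phi> h = D' 0" using pre[OF B.D_Lip] by blast
      have "\<Phi> h = \<Phi> (odot T h (D 0))" using A.odot_e_right[OF h(1)] by simp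
      also have "\<dots> = odot T (\<Phi> h) (\<Phi> (D 0))" by (rule od[OF h(1) A.D_Lip])
      also have "\<dots> = \<Phi> (D 0)" using h(2) B.odot_e_left[OF inL[OF A.D_Lip]] by simp
      finally show ?thesis using h(2) by simp
    qed
    have ex: "\<exists>b. \<Phi> (D a) = D' b" for a
    proof (rule B.unit_D[OF assms(7) inL[OF A.D_Lip] inL[OF A.D_Lip[of "-a"]]])
      have "odot T (\<Phi> (D a)) (\<Phi> (D (- a))) = \<Phi> (odot T (D a) (D (- a)))" using od[OF A.D_Lip A.D_Lip] by simp
      also have "\<dots> = D' 0" using A.odot_D[of a "-a"] e by simp
      finally show "odot T (\<Phi> (D a)) (\<Phi> (D (- a))) = D' 0" .
    qed
    have "\<forall>a. \<exists>b. \<Phi> (D a) = D' b" using ex by blast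
    from choice[OF this] obtain I where I0: "\<forall>a. \<Phi> (D a) = D' (I a)" by blast
    note I = I0[rule_format]
    have hom: "I (x + y) = I x + I y" for x y
    proof (rule B.D_inj)
      have "D' (I (x + y)) = \<Phi> (odot T (D x) (D y))" using I A.odot_D by simp
      also have "\<dots> = odot T (D' (I x)) (D' (I y))" using od[OF A.D_Lip A.D_Lip] I by simp
      also have "\<dots> = D' (I x + I y)" by (rule B.odot_D)
      finally show "D' (I (x + y)) = D' (I x + I y)" .
    qed
    have iso: "D' (I x) (I y) = D x y" for x y
    proof -
      have "D' (I x) (I y) = Dbar T D' (D' (I x)) (D' (I y))" using B.Dbar_D by simp
      also have "\<dots> = Dbar T D' (\<Phi> (D x)) (\<Phi> (D y))" using I by simp
      also have "\<dots> = Dbar T D (D x) (D y)" by (rule db[OF A.D_Lip A.D_Lip])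
      also have "\<dots> = D x y" by (rule A.Dbar_D)
      finally show ?thesis .
    qed
    have inj: "inj I"
    proof (rule injI)
      fix x y assume "I x = I y"
      then have "D x y = H0" using iso[of x y] B.D_self by simp
      then show "x = y" using A.D_eq by simp
    qed
    have surj: "surj I"
    proof -
      have "b' \<in> range I" for b'
      proof -
        obtain f where f: "f \<in> Lip T D" "\<Phi> f = D' b'" using pre[OF B.D_Lip] by blast
        obtain g where g: "g \<in> Lip T D" "\<Phi> g = D' (- b')" using pre[OF B.D_Lip] by blast
        have fg: "odot T f g \<in> Lip T D" by (rule A.odot_Lip[OF f(1) g(1)])
        have "\<Phi> (odot T f g) = odot T (D' b') (D' (- b'))" using od[OF f(1) g(1)] f g by simp
        also have "\<dots> = D' 0" using B.odot_D[of b' "-b'"] by simp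
        also have "\<dots> = \<Phi> (D 0)" using e by simp
        finally have "odot T f g = D 0" using injP fg A.D_Lip by (meson inj_on_def)
        then obtain a where a: "f = D a" using A.unit_D[OF assms(4) f(1) g(1)] by blast
        have "D' (I a) = D' b'" using I[of a] f(2) a by simp
        then have "I a = b'" by (rule B.D_inj)
        then show ?thesis by blast
      qed
      then show ?thesis by blast
    qed
    show "\<exists>I :: 'a \<Rightarrow> 'b. bij I \<and> (\<forall>x y. I (x + y) = I x + I y) \<and> (\<forall>x y. D' (I x) (I y) = D x y)"
      using inj surj hom iso by (intro exI[of _ I]) (auto simp: bij_def)
  qed
qed

end
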